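(* For a generic twisted $(N,1)$ spiral ($N\ge5$, $N\not\equiv1\pmod3$) with invariants $a_k,b_k,c_k$ from its normalized lift: (i) $c_N=\det\rho_{N+1}$ and $c_Nc_{-1}=A_0A_1$; consequently $A_0=\dfrac{a_{N-1}c_N}{A_1a_0}$ and $b_{-1}=\dfrac1{a_0}\Big(\dfrac{a_{N-1}c_N}{A_1a_0}-1\Big)$; (ii) $c_{N+1}(c_N+b_Na_{N-2})=c_N$ and $c_N+b_Na_{N-2}=\dfrac{c_N^2}{A_1A_2}$; consequently $b_N=\dfrac{c_N}{a_{N-2}}\Big(\dfrac{c_N}{A_1A_2}-1\Big)$ and $c_{N+1}=\dfrac{A_1A_2}{c_N}$; (iii) $a_{-1}=\dfrac{c_{N+1}a_{N-1}a_{N-2}}{c_Na_0}(1+a_1b_0)=\dfrac{a_{N-1}^2a_{N-2}A_1A_2}{a_0^2c_NA_0}$.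
   Context: Points lie in $\mathbb{RP}^2$; $M\in PSL(3,\mathbb R)$ is identified with a representing matrix in $SL(3,\mathbb R)$. For a bi-infinite sequence $(p_k)_{k\in\mathbb Z}$ in $\mathbb{RP}^2$, $T(p_k)=\overline{p_{k-1}p_{k+1}}\cap\overline{p_kp_{k+2}}$. A twisted $(N,1)$ pentagram spiral with monodromy $M$ is a bi-infinite sequence $(p_k)$ with $p_{N+k}=M\cdot T(p_{k-1})$ for all $k$, such that $p_{N+1}$ lies on the segment joining $p_N$ and $M\cdot p_1$; "generic" means all determinants and denominators appearing are nonzero. For vectors define $T(V_i)=(V_{i-1}\times V_{i+1})\times(V_i\times V_{i+2})$, $\overline T(V_i)=c_{i+1}(V_i\times V_{i+1})\times(V_{i-2}\times V_{i-1})$, $c_i=\det(V_{i+1},V_{i+2},V_{i+3})/\det(V_i,V_{i+1},V_{i+2})$. The normalized lift is the unique sequence $V_k$ with $[V_k]=p_k$, $V_{N+i}=MT(V_{i-1})$ and $V_{-i}=M^{-1}\overline T(V_{N-i+1})$ for $i\ge1$, and $\det(V_i,V_{i+1},V_{i+2})=1$ for $i=0,\dots,N$. Invariants: $V_{i+3}=a_iV_{i+2}+b_iV_{i+1}+c_iV_i$ (so $c_i=1$ for $0\le i\le N-1$); $A_i=c_i+a_ib_{i-1}$; $\rho_i=(V_i,V_{i+1},V_{i+2})$. *)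

theory Defs
  imports "HOL-Analysis.Analysis"
begin

definition det3 :: "real^3 \<Rightarrow> real^3 \<Rightarrow> real^3 \<Rightarrow> real" where
  "det3 u v w = det (vector [u, v, w] :: real^3^3)"

definition cinv :: "(int \<Rightarrow> real^3) \<Rightarrow> int \<Rightarrow> real" where
  "cinv V i = det3 (V (i+1)) (V (i+2)) (V (i+3)) / det3 (V i) (V (i+1)) (V (i+2))"

(* T(V_i) = (V_{i-1} x V_{i+1}) x (V_i x V_{i+2}) ; on representatives of points of RP^2
   this is a representative of the intersection of lines p_{i-1}p_{i+1} and p_i p_{i+2} *)
definition Tmap :: "(int \<Rightarrow> real^3) \<Rightarrow> int \<Rightarrow> real^3" where
  "Tmap V i = cross3 (cross3 (V (i-1)) (V (i+1))) (cross3 (V i) (V (i+2)))"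

definition Tbar :: "(int \<Rightarrow> real^3) \<Rightarrow> int \<Rightarrow> real^3" where
  "Tbar V i = cinv V (i+1) *\<^sub>R cross3 (cross3 (V i) (V (i+1))) (cross3 (V (i-2)) (V (i-1)))"

(* projective equality [u] = [v] of nonzero representatives *)
definition proj_eq :: "real^3 \<Rightarrow> real^3 \<Rightarrow> bool" where
  "proj_eq u v \<longleftrightarrow> u \<noteq> 0 \<and> v \<noteq> 0 \<and> (\<exists>l::real. l \<noteq> 0 \<and> u = l *\<^sub>R v)"

(* twisted (N,1) pentagram spiral with monodromy M; points given by nonzero representatives p k *)
definition twisted_spiral :: "int \<Rightarrow> real^3^3 \<Rightarrow> (int \<Rightarrow> real^3) \<Rightarrow> bool" where
  "twisted_spiral N M p \<longleftrightarrow>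
     det M = 1 \<and> (\<forall>k. p k \<noteq> 0) \<and>
     (\<forall>k. proj_eq (p (N + k)) (M *v Tmap p (k - 1))) \<and>
     det3 (p N) (p (N + 1)) (M *v p 1) = 0"

definition normalized_lift :: "int \<Rightarrow> real^3^3 \<Rightarrow> (int \<Rightarrow> real^3) \<Rightarrow> (int \<Rightarrow> real^3) \<Rightarrow> bool" where
  "normalized_lift N M p V \<longleftrightarrow>
     (\<forall>k. proj_eq (V k) (p k)) \<and>
     (\<forall>i\<ge>1. V (N + i) = M *v Tmap V (i - 1)) \<and>
     (\<forall>i\<ge>1. V (- i) = matrix_inv M *v Tbar V (N - i + 1)) \<and>
     (\<forall>i. 0 \<le> i \<and> i \<le> N \<longrightarrow> det3 (V i) (V (i+1)) (V (i+2)) = 1)"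

end

theory Submission
  imports Defs
begin


lemma det3_expand: "det3 u v w =
  u$1 * v$2 * w$3 - u$1 * v$3 * w$2 - u$2 * v$1 * w$3 + u$2 * v$3 * w$1 + u$3 * v$1 * w$2 - u$3 * v$2 * w$1"
  unfolding det3_def by (simp add: det_3 algebra_simps)

lemma det3_add1: "det3 (x + y) v w = det3 x v w + det3 y v w" by (simp add: det3_expand algebra_simps)
lemma det3_add2: "det3 u (x + y) w = det3 u x w + det3 u y w" by (simp add: det3_expand algebra_simps)
lemma det3_add3: "det3 u v (x + y) = det3 u v x + det3 u v y" by (simp add: det3_expand algebra_simps)
lemma det3_diff1: "det3 (x - y) v w = det3 x v w - det3 y v w" by (simp add: det3_expand algebra_simps)
lemma det3_diff2: "det3 u (x - y) w = det3 u x w - det3 u y w" by (simp add: det3_expand algebra_simps)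
lemma det3_diff3: "det3 u v (x - y) = det3 u v x - det3 u v y" by (simp add: det3_expand algebra_simps)
lemma det3_sc1: "det3 (r *\<^sub>R x) v w = r * det3 x v w" by (simp add: det3_expand algebra_simps)
lemma det3_sc2: "det3 u (r *\<^sub>R x) w = r * det3 u x w" by (simp add: det3_expand algebra_simps)
lemma det3_sc3: "det3 u v (r *\<^sub>R x) = r * det3 u v x" by (simp add: det3_expand algebra_simps)
lemma det3_same: "det3 x x w = 0" "det3 x v x = 0" "det3 u x x = 0" by (simp_all add: det3_expand algebra_simps)
lemma det3_swap12: "det3 v u w = - det3 u v w" by (simp add: det3_expand algebra_simps)
lemma det3_swap23: "det3 u w v = - det3 u v w" by (simp add: det3_expand algebra_simps)
lemma det3_cyc: "det3 v w u = det3 u v w" by (simp add: det3_expand algebra_simps)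
lemma det3_zero: "det3 0 v w = 0" by (simp add: det3_expand)

lemmas det3_lin = det3_add1 det3_add2 det3_add3 det3_diff1 det3_diff2 det3_diff3 det3_sc1 det3_sc2 det3_sc3 det3_same

lemma det3_comb: "det3 (x1 *\<^sub>R u + x2 *\<^sub>R v + x3 *\<^sub>R w) (y1 *\<^sub>R u + y2 *\<^sub>R v + y3 *\<^sub>R w) (z1 *\<^sub>R u + z2 *\<^sub>R v + z3 *\<^sub>R w)
  = (x1*y2*z3 - x1*y3*z2 - x2*y1*z3 + x2*y3*z1 + x3*y1*z2 - x3*y2*z1) * det3 u v w"
  unfolding det3_expand by (simp add: algebra_simps)

lemma det3_mat: "det3 (M *v u) (M *v v) (M *v w) = det M * det3 u v w"
proof -
  have "(vector [M *v u, M *v v, M *v w] :: real^3^3) = vector [u, v, w] ** transpose M"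
    by (simp add: vec_eq_iff forall_3 matrix_matrix_mult_def matrix_vector_mult_def transpose_def vector_def sum_3 mult.commute)
  then show ?thesis unfolding det3_def by (simp add: det_mul det_transpose mult.commute)
qed

lemma cross_det3: "cross3 (cross3 a b) (cross3 c d) = det3 a b d *\<^sub>R c - det3 a b c *\<^sub>R d"
  unfolding det3_def by (rule cross_cross_det)



lemma inv_right: assumes "det M \<noteq> 0" shows "(M::real^3^3) *v (matrix_inv M *v x) = x"
proof -
  have "invertible M" using assms invertible_det_nz by blast
  then have "M ** matrix_inv M = mat 1"
    unfolding invertible_def matrix_inv_def by (rule someI_ex[THEN conjunct1])
  then show ?thesis by (simp add: matrix_vector_mul_assoc)
qed

lemma Tmap_scale: assumes "\<forall>k. V k = l k *\<^sub>R p k"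
  shows "Tmap V i = (l (i-1) * l (i+1) * (l i * l (i+2))) *\<^sub>R Tmap p i"
  unfolding Tmap_def using assms by (simp add: cross_mult_left cross_mult_right)

lemma lift_prop:
  assumes spiral: "twisted_spiral N M p" and P: "\<forall>k. proj_eq (V k) (p k)"
  shows "\<exists>s. V (N + k) = s *\<^sub>R (M *v Tmap V (k - 1))"
proof -
  obtain l where l: "\<forall>k. l k \<noteq> 0 \<and> V k = l k *\<^sub>R p k"
    using P unfolding proj_eq_def by metis
  obtain m where m: "p (N+k) = m *\<^sub>R (M *v Tmap p (k-1))"
    using spiral unfolding twisted_spiral_def proj_eq_def by blast
  define i where "i = k - 1"
  have T: "Tmap V i = (l (i-1) * l (i+1) * (l i * l (i+2))) *\<^sub>R Tmap p i"
    by (rule Tmap_scale) (use l in blast)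
  define q where "q = l (i-1) * l (i+1) * (l i * l (i+2))"
  have q: "q \<noteq> 0" using l unfolding q_def by simp
  have T': "Tmap p i = (1/q) *\<^sub>R Tmap V i" using T q unfolding q_def[symmetric] by simp
  have "V (N+k) = l (N+k) *\<^sub>R (m *\<^sub>R (M *v Tmap p i))" using l m unfolding i_def by simp
  also have "\<dots> = (l (N+k) * m / q) *\<^sub>R (M *v Tmap V i)" unfolding T' by (simp add: matrix_vector_mult_scaleR)
  finally have "V (N+k) = (l (N+k) * m / q) *\<^sub>R (M *v Tmap V i)" .
  then show ?thesis unfolding i_def by blast
qed



theorem mainTheorem10:
  fixes N :: int and M :: "real^3^3" and p V :: "int \<Rightarrow> real^3"
    and a b c A :: "int \<Rightarrow> real"
  assumes hN: "N \<ge> 5" and hmod: "N mod 3 \<noteq> 1"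
    and spiral: "twisted_spiral N M p"
    and lift: "normalized_lift N M p V"
    and rec: "\<forall>i. V (i + 3) = a i *\<^sub>R V (i + 2) + b i *\<^sub>R V (i + 1) + c i *\<^sub>R V i"
    and hA: "\<forall>i. A i = c i + a i * b (i - 1)"
    and gen_det: "\<forall>i. det3 (V i) (V (i+1)) (V (i+2)) \<noteq> 0"
    and gen_T: "\<forall>i. Tmap p i \<noteq> 0 \<and> Tmap V i \<noteq> 0"
    and gen_den: "a 0 \<noteq> 0" "a (N - 2) \<noteq> 0" "c N \<noteq> 0" "A 0 \<noteq> 0" "A 1 \<noteq> 0" "A 2 \<noteq> 0"
  shows "(c N = det3 (V (N+1)) (V (N+2)) (V (N+3)) \<and>
          c N * c (-1) = A 0 * A 1 \<and>
          A 0 = a (N - 1) * c N / (A 1 * a 0) \<and>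
          b (-1) = (1 / a 0) * (a (N - 1) * c N / (A 1 * a 0) - 1))
       \<and> (c (N+1) * (c N + b N * a (N - 2)) = c N \<and>
          c N + b N * a (N - 2) = (c N)^2 / (A 1 * A 2) \<and>
          b N = c N / a (N - 2) * (c N / (A 1 * A 2) - 1) \<and>
          c (N+1) = A 1 * A 2 / c N)
       \<and> (a (-1) = c (N+1) * a (N - 1) * a (N - 2) / (c N * a 0) * (1 + a 1 * b 0) \<and>
          c (N+1) * a (N - 1) * a (N - 2) / (c N * a 0) * (1 + a 1 * b 0)
            = (a (N - 1))^2 * a (N - 2) * A 1 * A 2 / ((a 0)^2 * c N * A 0))"
proof -
  define D where "D i = det3 (V i) (V (i+1)) (V (i+2))" for i
  have P: "\<forall>k. proj_eq (V k) (p k)" and F: "\<forall>i\<ge>1. V (N + i) = M *v Tmap V (i - 1)"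
    and B: "\<forall>i\<ge>1. V (- i) = matrix_inv M *v Tbar V (N - i + 1)"
    and D1: "\<And>i. 0 \<le> i \<Longrightarrow> i \<le> N \<Longrightarrow> D i = 1"
    using lift unfolding normalized_lift_def D_def by auto
  have detM: "det M = 1" using spiral unfolding twisted_spiral_def by simp
  have Dnz: "D i \<noteq> 0" for i using gen_det unfolding D_def by simp
  have recj: "V (j+2) = a (j-1) *\<^sub>R V (j+1) + b (j-1) *\<^sub>R V j + c (j-1) *\<^sub>R V (j-1)" for j
    using rec[rule_format, of "j-1"] by (simp add: add.commute)
  have rec_at: "V j = a k *\<^sub>R V j2 + b k *\<^sub>R V j1 + c k *\<^sub>R V k"
    if "k + 3 = j" "k + 2 = j2" "k + 1 = j1" for j j1 j2 k
    using rec that by metis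
  have Dstep: "D (i+1) = c i * D i" for i
  proof -
    have "D (i+1) = det3 (V (i+1)) (V (i+2)) (V (i+3))" unfolding D_def by (simp add: add.assoc)
    also have "\<dots> = c i * det3 (V (i+1)) (V (i+2)) (V i)"
      by (simp add: rec det3_lin)
    also have "\<dots> = c i * D i" unfolding D_def by (simp add: det3_cyc)
    finally show ?thesis .
  qed
  have c_eq: "c i = D (i+1) / D i" for i using Dstep[of i] Dnz[of i] by simp
  have c0: "c 0 = 1" and c1: "c 1 = 1" and c2: "c 2 = 1" and cN1: "c (N-1) = 1" and cN2: "c (N-2) = 1"
    using hN by (simp_all add: c_eq D1)
  have DN: "D N = 1" and D0: "D 0 = 1" and DN1': "D (N-1) = 1" and DN2': "D (N-2) = 1"
    and D2: "D 1 = 1" and D3: "D 2 = 1"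
    using hN by (simp_all add: D1)
  have Dm: "D (i-1) = det3 (V (i-1)) (V i) (V (i+1))" for i
  proof -
    have "i-1+1 = i" "i-1+2 = i+1" by simp_all
    then show ?thesis by (simp only: D_def)
  qed
  have Dm2: "D (i-2) = det3 (V (i-2)) (V (i-1)) (V i)" for i
  proof -
    have "i-2+1 = i-1" "i-2+2 = i" by simp_all
    then show ?thesis by (simp only: D_def)
  qed
  have cinv_eq: "cinv V i = c i" for i
    unfolding cinv_def c_eq D_def by (simp add: add.assoc)
  have Tm: "Tmap V i = D (i-1) *\<^sub>R V (i+2) - (b (i-1) * D (i-1)) *\<^sub>R V i" for i
  proof -
    have "Tmap V i = det3 (V (i-1)) (V (i+1)) (V (i+2)) *\<^sub>R V i - det3 (V (i-1)) (V (i+1)) (V i) *\<^sub>R V (i+2)"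
      unfolding Tmap_def by (rule cross_det3)
    moreover have "det3 (V (i-1)) (V (i+1)) (V i) = - D (i-1)"
      unfolding Dm using det3_swap23[of "V (i-1)" "V (i+1)" "V i"] by simp
    moreover have "det3 (V (i-1)) (V (i+1)) (V (i+2)) = - b (i-1) * D (i-1)"
      unfolding Dm using det3_swap23[of "V (i-1)" "V (i+1)" "V i"] by (simp add: recj[of i] det3_lin)
    ultimately show ?thesis by (simp add: algebra_simps)
  qed
  have Tb: "Tbar V i = (c (i+1) * D (i-2)) *\<^sub>R V (i+1) - (c (i+1) * det3 (V (i-2)) (V (i-1)) (V (i+1))) *\<^sub>R V i" for i
  proof -
    have "cross3 (cross3 (V i) (V (i+1))) (cross3 (V (i-2)) (V (i-1)))
        = - cross3 (cross3 (V (i-2)) (V (i-1))) (cross3 (V i) (V (i+1)))"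
      by (rule cross_skew)
    also have "\<dots> = - (det3 (V (i-2)) (V (i-1)) (V (i+1)) *\<^sub>R V i - det3 (V (i-2)) (V (i-1)) (V i) *\<^sub>R V (i+1))"
      by (simp add: cross_det3)
    finally have X: "cross3 (cross3 (V i) (V (i+1))) (cross3 (V (i-2)) (V (i-1)))
       = det3 (V (i-2)) (V (i-1)) (V i) *\<^sub>R V (i+1) - det3 (V (i-2)) (V (i-1)) (V (i+1)) *\<^sub>R V i"
      by (simp add: algebra_simps)
    show ?thesis unfolding Tbar_def Dm2 cinv_eq X by (simp add: algebra_simps)
  qed
  have inv: "M *v (matrix_inv M *v x) = x" for x using detM inv_right by simp
  define W where "W k = M *v V k" for k
  have Wm1: "W (-1) = c (N+1) *\<^sub>R V (N+1) - (c (N+1) * a (N-2)) *\<^sub>R V N"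
  proof -
    have "W (-1) = Tbar V N" unfolding W_def using B[rule_format, of 1] inv by simp
    moreover have "det3 (V (N-2)) (V (N-1)) (V (N+1)) = a (N-2)"
      using DN2' rec_at[of "N-2" "N+1" "N" "N-1"] unfolding Dm2 by (simp add: det3_lin cN2)
    ultimately show ?thesis using Tb[of N] DN2' by simp
  qed
  have Wm2: "\<exists>\<alpha> \<beta>. W (-2) = \<alpha> *\<^sub>R V N + \<beta> *\<^sub>R V (N-1)"
  proof -
    have "W (-2) = Tbar V (N-1)" unfolding W_def using B[rule_format, of 2] inv by simp
    then have "W (-2) = (c N * D (N-3)) *\<^sub>R V N - (c N * det3 (V (N-3)) (V (N-2)) (V N)) *\<^sub>R V (N-1)"
      using Tb[of "N-1"] by simp
    then show ?thesis by (metis scaleR_minus_left diff_conv_add_uminus)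
  qed

  have D0': "det3 (V 0) (V 1) (V 2) = 1" using D0 unfolding D_def by simp
  have DN': "det3 (V N) (V (N+1)) (V (N+2)) = 1" using DN unfolding D_def by simp
  have DNm1': "det3 (V (N-1)) (V N) (V (N+1)) = 1" using DN1' unfolding Dm[of N] .
  have V3: "V 3 = a 0 *\<^sub>R V 2 + b 0 *\<^sub>R V 1 + V 0" using rec_at[of 0 3 2 1] c0 by simp
  have V4: "V 4 = a 1 *\<^sub>R V 3 + b 1 *\<^sub>R V 2 + V 1" using rec_at[of 1 4 3 2] c1 by simp
  have V5: "V 5 = a 2 *\<^sub>R V 4 + b 2 *\<^sub>R V 3 + V 2" using rec_at[of 2 5 4 3] c2 by simp
  have VN1: "V (N+1) = M *v ((- (b (-1) * D (-1))) *\<^sub>R V 0 + 0 *\<^sub>R V 1 + D (-1) *\<^sub>R V 2)"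
    using F[rule_format, of 1] Tm[of 0] by (simp add: algebra_simps)
  have VN2: "V (N+2) = M *v (1 *\<^sub>R V 0 + 0 *\<^sub>R V 1 + a 0 *\<^sub>R V 2)"
    using F[rule_format, of 2] Tm[of 1] D0 by (simp add: V3 algebra_simps)
  have VN3: "V (N+3) = M *v (a 1 *\<^sub>R V 0 + (a 1 * b 0 + 1) *\<^sub>R V 1 + (a 1 * a 0) *\<^sub>R V 2)"
    using F[rule_format, of 3] Tm[of 2] D2 by (simp add: V4 V3 algebra_simps)
  have VN4: "V (N+4) = M *v ((a 2 * a 1) *\<^sub>R V 0 + (a 2 * (a 1 * b 0 + 1)) *\<^sub>R V 1 + (a 2 * (a 1 * a 0 + b 1) + 1) *\<^sub>R V 2)"
    using F[rule_format, of 4] Tm[of 3] D3 by (simp add: V5 V4 V3 algebra_simps)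
  have A0: "A 0 = 1 + a 0 * b (-1)" using hA c0 by simp
  have A1: "A 1 = 1 + a 1 * b 0" using hA c1 by simp
  have A2: "A 2 = 1 + a 2 * b 1" using hA c2 by simp
  have DNp1: "D (N+1) = det3 (V (N+1)) (V (N+2)) (V (N+3))" unfolding D_def by (simp add: add.assoc)
  have DNp2: "D (N+2) = det3 (V (N+2)) (V (N+3)) (V (N+4))" unfolding D_def by (simp add: add.assoc)
  have f2: "D (N+1) = D (-1) * A 0 * A 1"
    unfolding DNp1 VN1 VN2 VN3 det3_mat detM det3_comb D0' A0 A1 by (simp add: algebra_simps)
  have DN2v: "D (N+2) = A 1 * A 2"
    unfolding DNp2 VN2 VN3 VN4 det3_mat detM det3_comb D0' A1 A2 by (simp add: algebra_simps)
  have cN: "c N = D (N+1)" using Dstep[of N] DN by simp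
  have cN1: "c (N+1) * D (N+1) = D (N+2)" using Dstep[of "N+1"] by (simp add: add.assoc)
  have f1: "c (-1) * D (-1) = 1" using Dstep[of "-1"] D0 by simp

  have W0: "A 0 *\<^sub>R W 0 = V (N+2) - (a 0 * c (-1)) *\<^sub>R V (N+1)"
  proof -
    have "V (N+2) - (a 0 * c (-1)) *\<^sub>R V (N+1)
       = M *v ((1 + a 0 * b (-1) * (c (-1) * D (-1))) *\<^sub>R V 0 + (a 0 - a 0 * (c (-1) * D (-1))) *\<^sub>R V 2)"
      unfolding VN1 VN2 by (simp add: algebra_simps)
    also have "\<dots> = M *v (A 0 *\<^sub>R V 0)" using f1 A0 by simp
    finally show ?thesis unfolding W_def by (simp add: algebra_simps)
  qed
  have W1: "A 1 *\<^sub>R W 1 = V (N+3) - a 1 *\<^sub>R V (N+2)"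
    unfolding W_def VN2 VN3 A1 by (simp add: algebra_simps)
  have W2: "a 0 *\<^sub>R W 2 = V (N+2) - W 0"
    unfolding W_def VN2 by (simp add: algebra_simps)
  obtain s where s: "V (N-1) = s *\<^sub>R (M *v Tmap V (-2))"
    using lift_prop[OF spiral P, of "-1"] by auto
  obtain \<alpha> \<beta> where ab: "W (-2) = \<alpha> *\<^sub>R V N + \<beta> *\<^sub>R V (N-1)" using Wm2 by blast
  define \<sigma> where "\<sigma> = s * D (-3)"
  have e1: "V (N-1) = \<sigma> *\<^sub>R W 0 - (\<sigma> * b (-3)) *\<^sub>R W (-2)"
    using s Tm[of "-2"] unfolding \<sigma>_def W_def by (simp add: algebra_simps)
  have "\<sigma> \<noteq> 0"
  proof
    assume "\<sigma> = 0"
    then have "V (N-1) = 0" using e1 by simp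
    then show False using DNm1' det3_zero by simp
  qed
  have "det3 (V (N-1)) (V N) (\<sigma> *\<^sub>R W 0) = 0"
  proof -
    have "\<sigma> *\<^sub>R W 0 = V (N-1) + (\<sigma> * b (-3)) *\<^sub>R (\<alpha> *\<^sub>R V N + \<beta> *\<^sub>R V (N-1))"
      using e1 ab by (simp add: algebra_simps)
    then show ?thesis by (simp add: det3_lin)
  qed
  then have z1: "det3 (V (N-1)) (V N) (W 0) = 0" using \<open>\<sigma> \<noteq> 0\<close> by (simp add: det3_lin)
  have "det3 (V (N-1)) (V N) (V (N+2)) = a (N-1)"
    using rec_at[of "N-1" "N+2" "N+1" N] DNm1' by (simp add: det3_lin)
  then have "0 = a (N-1) - a 0 * c (-1)"
    using arg_cong[OF W0, of "det3 (V (N-1)) (V N)"] z1 DNm1' by (simp add: det3_lin)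
  then have f3: "a (N-1) = a 0 * c (-1)" by simp

  obtain s' where s': "V N = s' *\<^sub>R (M *v Tmap V (-1))"
    using lift_prop[OF spiral P, of 0] by auto
  define \<tau> where "\<tau> = s' * D (-2)"
  have e2: "V N = \<tau> *\<^sub>R W 1 - (\<tau> * b (-2)) *\<^sub>R W (-1)"
    using s' Tm[of "-1"] unfolding \<tau>_def W_def by (simp add: algebra_simps)
  have "\<tau> \<noteq> 0"
  proof
    assume "\<tau> = 0"
    then have "V N = 0" using e2 by simp
    then show False using DN' det3_zero by simp
  qed
  have "det3 (V N) (V (N+1)) (\<tau> *\<^sub>R W 1) = 0"
  proof -
    have "\<tau> *\<^sub>R W 1 = V N + (\<tau> * b (-2)) *\<^sub>R (c (N+1) *\<^sub>R V (N+1) - (c (N+1) * a (N-2)) *\<^sub>R V N)"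
      using e2 Wm1 by (simp add: algebra_simps)
    then show ?thesis by (simp add: det3_lin)
  qed
  then have z2: "det3 (V N) (V (N+1)) (W 1) = 0" using \<open>\<tau> \<noteq> 0\<close> by (simp add: det3_lin)
  have VN3r: "V (N+3) = a N *\<^sub>R V (N+2) + b N *\<^sub>R V (N+1) + c N *\<^sub>R V N"
    using rec_at[of N "N+3" "N+2" "N+1"] by simp
  have "det3 (V N) (V (N+1)) (V (N+3)) = a N"
    using VN3r DN' by (simp add: det3_lin)
  then have "0 = a N - a 1"
    using arg_cong[OF W1, of "det3 (V N) (V (N+1))"] z2 DN' by (simp add: det3_lin)
  then have aN: "a N = a 1" by simp
  have Dm1: "D (-1) = det3 (W (-1)) (W 0) (W 1)"
    unfolding W_def det3_mat detM D_def by simp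
  have Wm1c: "W (-1) = (- (c (N+1) * a (N-2))) *\<^sub>R V N + c (N+1) *\<^sub>R V (N+1) + 0 *\<^sub>R V (N+2)"
    using Wm1 by (simp add: algebra_simps)
  have W0c: "A 0 *\<^sub>R W 0 = 0 *\<^sub>R V N + (- (a 0 * c (-1))) *\<^sub>R V (N+1) + 1 *\<^sub>R V (N+2)"
    using W0 by (simp add: algebra_simps)
  have W1c: "A 1 *\<^sub>R W 1 = c N *\<^sub>R V N + b N *\<^sub>R V (N+1) + 0 *\<^sub>R V (N+2)"
    using W1 VN3r aN by (simp add: algebra_simps)
  have "A 0 * A 1 * D (-1) = det3 (W (-1)) (A 0 *\<^sub>R W 0) (A 1 *\<^sub>R W 1)"
    unfolding Dm1 by (simp add: det3_lin)
  also have "\<dots> = c (N+1) * (c N + b N * a (N-2))"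
    unfolding Wm1c W0c W1c det3_comb DN' by (simp add: algebra_simps)
  finally have f5: "A 0 * A 1 * D (-1) = c (N+1) * (c N + b N * a (N-2))" .
  have "det3 (V (-1)) (V 0) (V 2) = a (-1) * D (-1)"
    using rec_at[of "-1" 2 1 0] unfolding D_def by (simp add: det3_lin)
  then have Wa: "det3 (W (-1)) (W 0) (W 2) = a (-1) * D (-1)"
    unfolding W_def det3_mat detM by simp
  have W2c: "a 0 *\<^sub>R (A 0 *\<^sub>R W 2) = 0 *\<^sub>R V N + (a 0 * c (-1)) *\<^sub>R V (N+1) + (A 0 - 1) *\<^sub>R V (N+2)"
  proof -
    have "a 0 *\<^sub>R (A 0 *\<^sub>R W 2) = A 0 *\<^sub>R (a 0 *\<^sub>R W 2)" by simp
    also have "\<dots> = A 0 *\<^sub>R V (N+2) - A 0 *\<^sub>R W 0" unfolding W2 by (simp add: algebra_simps)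
    also have "\<dots> = 0 *\<^sub>R V N + (a 0 * c (-1)) *\<^sub>R V (N+1) + (A 0 - 1) *\<^sub>R V (N+2)"
      unfolding W0 by (simp add: algebra_simps)
    finally show ?thesis .
  qed
  have "A 0 * (a 0 * A 0) * (a (-1) * D (-1)) = det3 (W (-1)) (A 0 *\<^sub>R W 0) (a 0 *\<^sub>R (A 0 *\<^sub>R W 2))"
    unfolding Wa[symmetric] by (simp add: det3_lin)
  also have "\<dots> = c (N+1) * a (N-2) * a 0 * c (-1) * A 0"
    unfolding Wm1c W0c W2c det3_comb DN' by (simp add: algebra_simps)
  finally have f6: "A 0 * (a 0 * A 0) * (a (-1) * D (-1)) = c (N+1) * a (N-2) * a 0 * c (-1) * A 0" .

  have dnz: "D (-1) \<noteq> 0" by (rule Dnz)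
  have cmnz: "c (-1) \<noteq> 0" using f1 by auto
  have cNv: "c N = D (-1) * A 0 * A 1" using cN f2 by simp
  have g1: "c N = det3 (V (N+1)) (V (N+2)) (V (N+3))" using cN DNp1 by simp
  have g2: "c N * c (-1) = A 0 * A 1" using cNv f1 by (simp add: algebra_simps)
  have g3: "A 0 = a (N - 1) * c N / (A 1 * a 0)"
    using g2 f3 gen_den by (simp add: field_simps)
  have g4: "b (-1) = (1 / a 0) * (a (N - 1) * c N / (A 1 * a 0) - 1)"
    unfolding g3[symmetric] A0 using gen_den by (simp add: field_simps)
  have h5: "A 0 * A 1 * D (-1) = c N" using cNv by (simp add: algebra_simps)
  have g5: "c (N+1) * (c N + b N * a (N - 2)) = c N" by (simp only: f5[symmetric] h5)
  have g8: "c (N+1) = A 1 * A 2 / c N" using cN1 cN DN2v gen_den by (simp add: field_simps)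
  have g6: "c N + b N * a (N - 2) = (c N)^2 / (A 1 * A 2)"
  proof -
    have nz: "c (N+1) \<noteq> 0" using g8 gen_den by simp
    have "c N + b N * a (N - 2) = c N / c (N+1)" using g5 nz by (simp add: eq_divide_eq mult.commute)
    then show ?thesis unfolding g8 using gen_den by (simp add: power2_eq_square)
  qed
  have g7: "b N = c N / a (N - 2) * (c N / (A 1 * A 2) - 1)"
    using g6 gen_den by (simp add: field_simps power2_eq_square)
  have am1: "a (-1) = c (N+1) * a (N-2) * c (-1) / (A 0 * D (-1))"
    using f6 gen_den dnz by (simp add: field_simps)
  have g9: "a (-1) = c (N+1) * a (N - 1) * a (N - 2) / (c N * a 0) * (1 + a 1 * b 0)"
    unfolding am1 A1[symmetric] f3 cNv using gen_den dnz by (simp add: field_simps)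
  have g10: "c (N+1) * a (N - 1) * a (N - 2) / (c N * a 0) * (1 + a 1 * b 0)
            = (a (N - 1))^2 * a (N - 2) * A 1 * A 2 / ((a 0)^2 * c N * A 0)"
    unfolding A1[symmetric] g8 f3 cNv using gen_den dnz cmnz f1 by (simp add: field_simps power2_eq_square)
  show ?thesis using g1 g2 g3 g4 g5 g6 g7 g8 g9 g10 by blast
qed

end
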